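(* Let $a_1,a_2,\dots$ be complex numbers, and let $r,k\geq0$ and $n$ be integers. Then $\mathcal{A}_{n,k}(a_{r+1},a_{r+2},\dots)$ equals \[ \sum_{j_1+j_2+\cdots+j_{r+1}=k}\binom{k}{j_1,j_2,\dots,j_{r+1}}(-a_1)^{j_1}(-a_2)^{j_2}\cdots(-a_r)^{j_r}\,\mathcal{A}_{n+J+rj_{r+1},\,j_{r+1}}(a_1,a_2,\dots), \] where $J=(r-1)j_1+(r-2)j_2+\cdots+1\cdot j_{r-1}$ and the sum is over all $j_1,\dots,j_{r+1}\in\mathbb{Z}_{\geq0}$ with sum $k$.
   Context: For integers $n$ and $k\geq0$ and a sequence $b_1,b_2,\dots$, the De Moivre polynomial $\mathcal{A}_{n,k}(b_1,b_2,\dots)$ is the coefficient of $x^n$ in $(b_1x+b_2x^2+b_3x^3+\cdots)^k$ (so $\mathcal{A}_{0,0}=1$ and $\mathcal{A}_{n,k}=0$ for $n<k$). $\binom{k}{j_1,\dots,j_{r+1}}$ is the multinomial coefficient. *)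

theory Defs
  imports Complex_Main "HOL-Computational_Algebra.Formal_Power_Series"
begin

definition demoivre_series :: "(nat \<Rightarrow> complex) \<Rightarrow> complex fps" where
  "demoivre_series b = Abs_fps (\<lambda>i. if i = 0 then 0 else b i)"

text \<open>De Moivre polynomial A_{n,k}(b_1,b_2,...): coefficient of x^n in
  (b_1 x + b_2 x^2 + ...)^k; for negative n it is 0.\<close>
definition demoivre :: "int \<Rightarrow> nat \<Rightarrow> (nat \<Rightarrow> complex) \<Rightarrow> complex" where
  "demoivre n k b = (if n < 0 then 0 else fps_nth (demoivre_series b ^ k) (nat n))"

definition multinomial_coeff :: "nat \<Rightarrow> (nat \<Rightarrow> nat) \<Rightarrow> nat set \<Rightarrow> nat" where
  "multinomial_coeff k j I = fact k div (\<Prod>i\<in>I. fact (j i))"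

text \<open>Index set of tuples (j_1,...,j_m) of nonnegative integers with sum k,
  represented as functions vanishing outside {1..m}.\<close>
definition compositions :: "nat \<Rightarrow> nat \<Rightarrow> (nat \<Rightarrow> nat) set" where
  "compositions m k = {j. (\<forall>i. i \<notin> {1..m} \<longrightarrow> j i = 0) \<and> (\<Sum>i=1..m. j i) = k}"

end

theory Submission imports Defs begin
unbundle fps_syntax


lemma compositions_finite: "finite (compositions m k)"
proof -
  have "compositions m k \<subseteq> {f. \<forall>x. (x \<in> {1..m} \<longrightarrow> f x \<in> {..k}) \<and> (x \<notin> {1..m} \<longrightarrow> f x = 0)}"
  proof
    fix j assume j: "j \<in> compositions m k"
    have "j x \<le> k" if "x \<in> {1..m}" for x
      using j that member_le_sum[of x "{1..m}" j] by (auto simp: compositions_def)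
    then show "j \<in> {f. \<forall>x. (x \<in> {1..m} \<longrightarrow> f x \<in> {..k}) \<and> (x \<notin> {1..m} \<longrightarrow> f x = 0)}"
      using j by (auto simp: compositions_def)
  qed
  moreover have "finite {f. \<forall>x. (x \<in> {1..m} \<longrightarrow> f x \<in> {..k}) \<and> (x \<notin> {1..m} \<longrightarrow> f x = (0::nat))}"
    by (rule finite_set_of_finite_funs) auto
  ultimately show ?thesis by (rule finite_subset)
qed

lemma prod_fact_dvd: "finite I \<Longrightarrow> (\<Prod>i\<in>I. fact (j i) :: nat) dvd fact (\<Sum>i\<in>I. j i)"
proof (induction I rule: finite_induct)
  case empty then show ?case by simp
next
  case (insert x F)
  have "fact (j x) * fact (sum j F) dvd (fact (j x + sum j F) :: nat)"
    using binomial_fact_lemma[of "j x" "j x + sum j F"] by (metis add_diff_cancel_left' dvd_triv_left le_add1)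
  moreover have "fact (j x) * (\<Prod>i\<in>F. fact (j i)) dvd fact (j x) * (fact (sum j F) :: nat)"
    using insert by simp
  ultimately have "fact (j x) * (\<Prod>i\<in>F. fact (j i)) dvd (fact (j x + sum j F) :: nat)"
    by (rule dvd_trans[rotated])
  then show ?case using insert by simp
qed

lemma compositions_Suc:
  "bij_betw (\<lambda>(t, j). j(Suc m := t)) (SIGMA t:{..k}. compositions m (k - t)) (compositions (Suc m) k)"
proof (rule bij_betwI[where g = "\<lambda>j. (j (Suc m), j(Suc m := 0))"])
  show "(\<lambda>(t, j). j(Suc m := t)) \<in> (SIGMA t:{..k}. compositions m (k - t)) \<rightarrow> compositions (Suc m) k"
  proof (rule Pi_I)
    fix p assume "p \<in> (SIGMA t:{..k}. compositions m (k - t))"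
    then obtain t j where p: "p = (t, j)" and t: "t \<in> {..k}" and j: "j \<in> compositions m (k - t)" by auto
    have "(\<Sum>i=1..m. (j(Suc m := t)) i) = (\<Sum>i=1..m. j i)"
      by (rule sum.cong) auto
    moreover have "(\<Sum>i=1..Suc m. (j(Suc m := t)) i) = (\<Sum>i=1..m. (j(Suc m := t)) i) + t" by simp
    ultimately have "(\<Sum>i=1..Suc m. (j(Suc m := t)) i) = k"
      using t j unfolding compositions_def by auto
    moreover have "\<forall>i. i \<notin> {1..Suc m} \<longrightarrow> (j(Suc m := t)) i = 0"
      using j unfolding compositions_def by auto
    ultimately have "j(Suc m := t) \<in> compositions (Suc m) k"
      unfolding compositions_def by (intro CollectI conjI)
    then show "(\<lambda>(t, j). j(Suc m := t)) p \<in> compositions (Suc m) k"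
      by (simp add: p)
  qed
  show "(\<lambda>j. (j (Suc m), j(Suc m := 0))) \<in> compositions (Suc m) k \<rightarrow> (SIGMA t:{..k}. compositions m (k - t))"
  proof (rule Pi_I)
    fix j assume j: "j \<in> compositions (Suc m) k"
    have s: "(\<Sum>i=1..m. (j(Suc m := 0)) i) = (\<Sum>i=1..m. j i)"
      by (rule sum.cong) auto
    have e: "(\<Sum>i=1..m. j i) + j (Suc m) = k" using j by (auto simp: compositions_def)
    then have "j (Suc m) \<in> {..k}" by auto
    moreover have "j(Suc m := 0) \<in> compositions m (k - j (Suc m))"
      using j s e unfolding compositions_def by auto
    ultimately show "(\<lambda>j. (j (Suc m), j(Suc m := 0))) j \<in> (SIGMA t:{..k}. compositions m (k - t))"
      by simp
  qed
  show "(\<lambda>j. (j (Suc m), j(Suc m := 0))) ((\<lambda>(t, j). j(Suc m := t)) x) = x"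
    if "x \<in> (SIGMA t:{..k}. compositions m (k - t))" for x
    using that unfolding compositions_def by auto
  show "(\<lambda>(t, j). j(Suc m := t)) ((\<lambda>j. (j (Suc m), j(Suc m := 0))) y) = y" for y
    by simp
qed
lemma compositions_0: "compositions 0 k = (if k = 0 then {\<lambda>_. 0} else {})"
  unfolding compositions_def by auto

lemma multinomial_coeff_Suc:
  assumes t: "t \<le> k" and j: "j \<in> compositions m (k - t)"
  shows "multinomial_coeff k (j(Suc m := t)) {1..Suc m} = (k choose t) * multinomial_coeff (k - t) j {1..m}"
proof -
  define P where "P = (\<Prod>i=1..m. fact (j i) :: nat)"
  have sj: "(\<Sum>i=1..m. j i) = k - t" using j by (auto simp: compositions_def)
  have "P dvd fact (k - t)" unfolding P_def using prod_fact_dvd[of "{1..m}" j] sj by simp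
  then obtain q where q: "fact (k - t) = P * q" by blast
  have P0: "P > 0" unfolding P_def by (simp add: prod_pos)
  have pr: "(\<Prod>i=1..Suc m. fact ((j(Suc m := t)) i) :: nat) = P * fact t"
  proof -
    have "(\<Prod>i=1..m. fact ((j(Suc m := t)) i) :: nat) = P"
      unfolding P_def by (rule prod.cong) auto
    then show ?thesis by simp
  qed
  have fk: "fact k = (k choose t) * fact t * fact (k - t)"
    using binomial_fact_lemma[OF t] by (simp add: ac_simps)
  have "multinomial_coeff k (j(Suc m := t)) {1..Suc m} = ((k choose t) * q * (P * fact t)) div (P * fact t)"
    unfolding multinomial_coeff_def pr fk q by (simp add: ac_simps)
  also have "\<dots> = (k choose t) * q" using P0 by simp
  also have "multinomial_coeff (k - t) j {1..m} = q"
    unfolding multinomial_coeff_def q P_def[symmetric] using P0 by simp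
  ultimately show ?thesis by simp
qed

lemma multinomial_thm:
  fixes f :: "nat \<Rightarrow> 'a :: comm_semiring_1"
  shows "(\<Sum>i=1..m. f i) ^ k = (\<Sum>j\<in>compositions m k. of_nat (multinomial_coeff k j {1..m}) * (\<Prod>i=1..m. f i ^ j i))"
proof (induction m arbitrary: k)
  case 0
  then show ?case by (simp add: compositions_0 multinomial_coeff_def power_0_left)
next
  case (Suc m)
  have "(\<Sum>i=1..Suc m. f i) ^ k = (f (Suc m) + (\<Sum>i=1..m. f i)) ^ k" by (simp add: add.commute)
  also have "\<dots> = (\<Sum>t\<le>k. of_nat (k choose t) * f (Suc m) ^ t * (\<Sum>i=1..m. f i) ^ (k - t))"
    by (rule binomial_ring)
  also have "\<dots> = (\<Sum>t\<le>k. \<Sum>j\<in>compositions m (k - t). of_nat (k choose t) * f (Suc m) ^ t *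
       (of_nat (multinomial_coeff (k - t) j {1..m}) * (\<Prod>i=1..m. f i ^ j i)))"
    by (simp only: Suc.IH sum_distrib_left)
  also have "\<dots> = (\<Sum>(t, j)\<in>(SIGMA t:{..k}. compositions m (k - t)). of_nat (k choose t) * f (Suc m) ^ t *
       (of_nat (multinomial_coeff (k - t) j {1..m}) * (\<Prod>i=1..m. f i ^ j i)))"
    by (rule sum.Sigma) (auto simp: compositions_finite)
  also have "\<dots> = (\<Sum>(t, j)\<in>(SIGMA t:{..k}. compositions m (k - t)).
       (\<lambda>j'. of_nat (multinomial_coeff k j' {1..Suc m}) * (\<Prod>i=1..Suc m. f i ^ j' i)) (j(Suc m := t)))"
  proof (rule sum.cong[OF refl], clarify)
    fix t j assume t: "t \<le> k" and j: "j \<in> compositions m (k - t)"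
    have p1: "(\<Prod>i=1..m. f i ^ (j(Suc m := t)) i) = (\<Prod>i=1..m. f i ^ j i)"
      by (rule prod.cong) auto
    have p2: "(\<Prod>i=1..Suc m. f i ^ (j(Suc m := t)) i) = (\<Prod>i=1..m. f i ^ (j(Suc m := t)) i) * f (Suc m) ^ t"
      by simp
    have mc: "(of_nat (multinomial_coeff k (j(Suc m := t)) {1..Suc m}) :: 'a) = of_nat (k choose t) * of_nat (multinomial_coeff (k - t) j {1..m})"
      by (simp only: multinomial_coeff_Suc[OF t j] of_nat_mult)
    then show "of_nat (k choose t) * f (Suc m) ^ t *
       (of_nat (multinomial_coeff (k - t) j {1..m}) * (\<Prod>i=1..m. f i ^ j i)) =
       of_nat (multinomial_coeff k (j(Suc m := t)) {1..Suc m}) * (\<Prod>i=1..Suc m. f i ^ (j(Suc m := t)) i)"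
      unfolding mc p2 p1 by (simp only: ac_simps)
  qed
  also have "\<dots> = (\<Sum>j\<in>compositions (Suc m) k. of_nat (multinomial_coeff k j {1..Suc m}) * (\<Prod>i=1..Suc m. f i ^ j i))"
    using sum.reindex_bij_betw[OF compositions_Suc[of m k], of "\<lambda>j'. of_nat (multinomial_coeff k j' {1..Suc m}) * (\<Prod>i=1..Suc m. f i ^ j' i)"]
    by (simp add: case_prod_unfold)
  finally show ?case .
qed

lemma fps_const_prod: "(\<Prod>i\<in>I. fps_const (c i)) = fps_const (\<Prod>i\<in>I. c i :: 'a :: comm_ring_1)"
  by (induction I rule: infinite_finite_induct) auto

lemma shift_series:
  "fps_X ^ r * demoivre_series (\<lambda>i. a (i + r)) =
   demoivre_series a + (\<Sum>i=1..r. fps_const (- a i) * fps_X ^ i)"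
proof (rule fps_ext)
  fix n
  have s: "(\<Sum>i=1..r. (fps_const (- a i) * fps_X ^ i) $ n) = (if n \<in> {1..r} then - a n else 0)"
  proof -
    have "(\<Sum>i=1..r. (fps_const (- a i) * fps_X ^ i) $ n) = (\<Sum>i=1..r. if n = i then - a i else 0)"
      by (rule sum.cong) auto
    also have "\<dots> = (if n \<in> {1..r} then - a n else 0)" by (simp add: sum.delta)
    finally show ?thesis .
  qed
  show "(fps_X ^ r * demoivre_series (\<lambda>i. a (i + r))) $ n =
     (demoivre_series a + (\<Sum>i=1..r. fps_const (- a i) * fps_X ^ i)) $ n"
    unfolding fps_add_nth fps_sum_nth s fps_X_power_mult_nth
    by (auto simp: demoivre_series_def)
qed

lemma weight_identity:
  assumes j: "j \<in> compositions (r + 1) k"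
  shows "(\<Sum>i=1..r. (r - i) * j i) + r * j (r + 1) + (\<Sum>i=1..r. i * j i) = r * k"
proof -
  have k: "(\<Sum>i=1..r. j i) + j (r + 1) = k" using j by (simp add: compositions_def)
  have "(\<Sum>i=1..r. (r - i) * j i) + (\<Sum>i=1..r. i * j i) = (\<Sum>i=1..r. r * j i)"
    unfolding sum.distrib[symmetric] by (rule sum.cong) (auto simp: add_mult_distrib[symmetric])
  also have "\<dots> = r * (\<Sum>i=1..r. j i)" by (simp add: sum_distrib_left)
  finally have X: "(\<Sum>i=1..r. (r - i) * j i) + (\<Sum>i=1..r. i * j i) = r * (\<Sum>i=1..r. j i)" .
  have "r * k = r * (\<Sum>i=1..r. j i) + r * j (r + 1)" using k by (metis add_mult_distrib2)
  then show ?thesis using X by linarith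
qed

theorem proposition7p2:
  fixes a :: "nat \<Rightarrow> complex" and r k :: nat and n :: int
  shows "demoivre n k (\<lambda>i. a (i + r)) =
    (\<Sum>j\<in>compositions (r + 1) k.
       of_nat (multinomial_coeff k j {1..r+1}) *
       (\<Prod>i=1..r. (- a i) ^ j i) *
       demoivre (n + int (\<Sum>i=1..r. (r - i) * j i) + int r * int (j (r + 1))) (j (r + 1)) a)"
proof -
  define A where "A = demoivre_series a"
  define B where "B = demoivre_series (\<lambda>i. a (i + r))"
  define f where "f i = (if i \<le> r then fps_const (- a i) * fps_X ^ i else A)" for i
  define D where "D j = (\<Sum>i=1..r. i * j i)" for j :: "nat \<Rightarrow> nat"
  define N where "N = n + int r * int k"
  have arg: "n + int (\<Sum>i=1..r. (r - i) * j i) + int r * int (j (r + 1)) = N - int (D j)"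
    if "j \<in> compositions (r + 1) k" for j
    using weight_identity[OF that] unfolding N_def D_def
    by (smt (verit, del_insts) of_nat_add of_nat_mult)
  have sumf: "(\<Sum>i=1..r+1. f i) = fps_X ^ r * B"
  proof -
    have "(\<Sum>i=1..r. f i) = (\<Sum>i=1..r. fps_const (- a i) * fps_X ^ i)"
      by (rule sum.cong) (auto simp: f_def)
    then show ?thesis by (simp add: shift_series f_def A_def B_def)
  qed
  have prodf: "(\<Prod>i=1..r+1. f i ^ j i) = fps_const (\<Prod>i=1..r. (- a i) ^ j i) * (fps_X ^ D j * A ^ j (r + 1))" for j
  proof -
    have "(\<Prod>i=1..r. f i ^ j i) = (\<Prod>i=1..r. fps_const ((- a i) ^ j i) * fps_X ^ (i * j i))"
      by (rule prod.cong) (auto simp: f_def power_mult_distrib power_mult mult.commute)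
    also have "\<dots> = fps_const (\<Prod>i=1..r. (- a i) ^ j i) * fps_X ^ D j"
      by (simp add: prod.distrib fps_const_prod D_def power_sum)
    finally show ?thesis by (simp add: f_def)
  qed
  have main: "fps_X ^ (r * k) * B ^ k = (\<Sum>j\<in>compositions (r + 1) k.
      fps_const (of_nat (multinomial_coeff k j {1..r+1}) * (\<Prod>i=1..r. (- a i) ^ j i)) * (fps_X ^ D j * A ^ j (r + 1)))"
  proof -
    have "fps_X ^ (r * k) * B ^ k = (fps_X ^ r * B) ^ k" by (simp add: power_mult_distrib power_mult)
    also have "\<dots> = (\<Sum>i=1..r+1. f i) ^ k" using sumf by simp
    also have "\<dots> = (\<Sum>j\<in>compositions (r + 1) k. of_nat (multinomial_coeff k j {1..r+1}) * (\<Prod>i=1..r+1. f i ^ j i))"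
      by (rule multinomial_thm)
    also have "\<dots> = (\<Sum>j\<in>compositions (r + 1) k.
      fps_const (of_nat (multinomial_coeff k j {1..r+1}) * (\<Prod>i=1..r. (- a i) ^ j i)) * (fps_X ^ D j * A ^ j (r + 1)))"
      by (rule sum.cong[OF refl]) (simp only: prodf fps_of_nat[symmetric] mult.assoc[symmetric] fps_const_mult)
    finally show ?thesis .
  qed
  show ?thesis
  proof (cases "N < 0")
    case True
    then have "n < 0" unfolding N_def by (smt (verit) of_nat_0_le_iff mult_nonneg_nonneg)
    then have l: "demoivre n k (\<lambda>i. a (i + r)) = 0" by (simp add: demoivre_def)
    show ?thesis unfolding l
      by (rule sum.neutral[symmetric]) (use True arg in \<open>auto simp: demoivre_def\<close>)
  next
    case False
    define M where "M = nat N"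
    have R: "int r * int k = int (r * k)" by simp
    have e1: "(M < r * k) = (n < 0)" unfolding M_def N_def R using False unfolding N_def R by arith
    have e2: "\<not> n < 0 \<Longrightarrow> M - r * k = nat n" unfolding M_def N_def R by arith
    have L: "(fps_X ^ (r * k) * B ^ k) $ M = demoivre n k (\<lambda>i. a (i + r))"
      unfolding fps_X_power_mult_nth demoivre_def B_def e1 using e2 by auto
    have T: "(fps_X ^ D j * A ^ j (r + 1)) $ M = demoivre (N - int (D j)) (j (r + 1)) a" for j
      unfolding fps_X_power_mult_nth demoivre_def A_def M_def using False
      by (auto simp: nat_diff_distrib)
    have "demoivre n k (\<lambda>i. a (i + r)) = (fps_X ^ (r * k) * B ^ k) $ M" using L by simp
    also have "\<dots> = (\<Sum>j\<in>compositions (r + 1) k. (of_nat (multinomial_coeff k j {1..r+1}) * (\<Prod>i=1..r. (- a i) ^ j i)) *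
        (fps_X ^ D j * A ^ j (r + 1)) $ M)"
      unfolding main fps_sum_nth fps_mult_left_const_nth by (rule refl)
    also have "\<dots> = (\<Sum>j\<in>compositions (r + 1) k.
       of_nat (multinomial_coeff k j {1..r+1}) *
       (\<Prod>i=1..r. (- a i) ^ j i) *
       demoivre (n + int (\<Sum>i=1..r. (r - i) * j i) + int r * int (j (r + 1))) (j (r + 1)) a)"
      by (rule sum.cong[OF refl]) (simp only: T arg mult.assoc)
    finally show ?thesis .
  qed
qed
end
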